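(* Let $\epsilon,\epsilon_0,\epsilon_\theta\in[0,1]$ and $\theta\in\mathbb R$. If $$\frac{\epsilon}{2-\epsilon}+\epsilon_0+\epsilon_\theta-2\ge 0,$$ then the three qubit POVMs $\mathsf N^{\rm prono}$, $\mathsf Q_0^{\rm prono}$ and $\mathsf Q_\theta^{\rm prono}$ (with noise parameters $\epsilon$, $\epsilon_0$, $\epsilon_\theta$ respectively) are jointly measurable. Moreover, if $\epsilon=\epsilon_0=\epsilon_\theta\ge 4/7$, then these three POVMs are jointly measurable.
   Context: All operators act on $\mathbb C^2$ (the span of the number states $|0\rangle,|1\rangle$). For $\varphi\in\mathbb R$ and noise $\delta\in[0,1]$, the noisy projected quadrature POVM on Borel sets $X\subseteq\mathbb R$ is $$\mathsf Q_\varphi^{\rm prono}(X)=\int_X\begin{pmatrix}1&(1-\delta)\sqrt2\,x\,e^{-i\varphi}\\(1-\delta)\sqrt2\,x\,e^{i\varphi}&(1-\delta)2x^2+\delta\end{pmatrix}\frac{e^{-x^2}\,dx}{\sqrt\pi},$$ with $\delta=\epsilon_0$ for $\varphi=0$ and $\delta=\epsilon_\theta$ for $\varphi=\theta$. The noisy projected number POVM has outcomes $\{0,1\}$: $\mathsf N^{\rm prono}_0=\begin{pmatrix}1-\epsilon/2&0\\0&\epsilon/2\end{pmatrix}$, $\mathsf N^{\rm prono}_1=\begin{pmatrix}\epsilon/2&0\\0&1-\epsilon/2\end{pmatrix}$. Three POVMs are jointly measurable if there is a POVM $\mathsf G$ on $\{0,1\}\times\mathbb R\times\mathbb R$ (product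 Borel $\sigma$-algebra) whose three marginals are $\mathsf N^{\rm prono}(\{n\})=\mathsf G(\{n\}\times\mathbb R\times\mathbb R)$, $\mathsf Q_0^{\rm prono}(X)=\mathsf G(\{0,1\}\times X\times\mathbb R)$, $\mathsf Q_\theta^{\rm prono}(Y)=\mathsf G(\{0,1\}\times\mathbb R\times Y)$. *)

theory Defs
  imports "HOL-Analysis.Analysis"
begin

text \<open>Operators on the two-dimensional space spanned by number states 0,1 are
  represented as complex 2x2 matrices (index 1 = state 0, index 2 = state 1).\<close>

type_synonym cmat2 = "complex^2^2"

definition mat2 :: "complex \<Rightarrow> complex \<Rightarrow> complex \<Rightarrow> complex \<Rightarrow> cmat2" where
  "mat2 a b c d = vector [vector [a, b], vector [c, d]]"

definition psd2 :: "cmat2 \<Rightarrow> bool" where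
  "psd2 M \<longleftrightarrow> (\<forall>v::complex^2. let q = (\<Sum>i\<in>UNIV. cnj (v $ i) * (M *v v) $ i)
                                  in Im q = 0 \<and> Re q \<ge> 0)"

definition povm :: "'a measure \<Rightarrow> ('a set \<Rightarrow> cmat2) \<Rightarrow> bool" where
  "povm M G \<longleftrightarrow>
     (\<forall>A\<in>sets M. psd2 (G A)) \<and> G (space M) = mat 1 \<and>
     (\<forall>F::nat \<Rightarrow> 'a set. range F \<subseteq> sets M \<longrightarrow> disjoint_family F \<longrightarrow>
         (\<lambda>n. G (F n)) sums G (\<Union>n. F n))"

definition quad_density :: "real \<Rightarrow> real \<Rightarrow> real \<Rightarrow> cmat2" where
  "quad_density \<delta> \<phi> x =
     (exp (- x\<^sup>2) / sqrt pi) *\<^sub>R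
     mat2 1
          (complex_of_real ((1 - \<delta>) * sqrt 2 * x) * exp (- \<i> * complex_of_real \<phi>))
          (complex_of_real ((1 - \<delta>) * sqrt 2 * x) * exp (\<i> * complex_of_real \<phi>))
          (complex_of_real ((1 - \<delta>) * 2 * x\<^sup>2 + \<delta>))"

definition quad_povm :: "real \<Rightarrow> real \<Rightarrow> real set \<Rightarrow> cmat2" where
  "quad_povm \<delta> \<phi> X = (\<chi> i j. LINT x:X|lborel. quad_density \<delta> \<phi> x $ i $ j)"

definition num_povm :: "real \<Rightarrow> nat \<Rightarrow> cmat2" where
  "num_povm \<epsilon> n =
     (if n = 0 then mat2 (complex_of_real (1 - \<epsilon>/2)) 0 0 (complex_of_real (\<epsilon>/2))
      else mat2 (complex_of_real (\<epsilon>/2)) 0 0 (complex_of_real (1 - \<epsilon>/2)))"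

definition joint_space :: "(nat \<times> real \<times> real) measure" where
  "joint_space = count_space {0, 1} \<Otimes>\<^sub>M (borel \<Otimes>\<^sub>M borel)"

definition jointly_measurable_prono :: "real \<Rightarrow> real \<Rightarrow> real \<Rightarrow> real \<Rightarrow> bool" where
  "jointly_measurable_prono \<epsilon> \<epsilon>0 \<epsilon>\<theta> \<theta> \<longleftrightarrow>
     (\<exists>G. povm joint_space G \<and>
        (\<forall>n\<in>{0,1}. num_povm \<epsilon> n = G ({n} \<times> UNIV \<times> UNIV)) \<and>
        (\<forall>X\<in>sets borel. quad_povm \<epsilon>0 0 X = G ({0,1} \<times> X \<times> UNIV)) \<and>
        (\<forall>Y\<in>sets borel. quad_povm \<epsilon>\<theta> \<theta> Y = G ({0,1} \<times> UNIV \<times> Y)))"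

end

theory Submission
  imports Defs "HOL-Probability.Distributions"
begin


definition gg :: "real \<Rightarrow> real" where "gg x = normal_density 0 (1/sqrt 2) x"
definition ff :: "real \<Rightarrow> real" where "ff x = normal_density 0 (1/2) x"
definition hh :: "real \<Rightarrow> real" where "hh x = 2/3 * ff x - gg x / 2"

lemma gg_eq: "gg x = exp (- x\<^sup>2) / sqrt pi"
  by (simp add: gg_def normal_density_def power_divide)

lemma ff_eq: "ff x = sqrt 2 / sqrt pi * exp (- 2 * x\<^sup>2)"
proof -
  have "sqrt (2 * pi * (1/2)\<^sup>2) = sqrt pi / sqrt 2"
    by (simp add: power2_eq_square real_sqrt_divide real_sqrt_mult field_simps)
  then show ?thesis unfolding ff_def normal_density_def
    by (simp add: power2_eq_square field_simps)
qed

lemma gg_nonneg: "0 \<le> gg x" by (simp add: gg_def)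
lemma ff_nonneg: "0 \<le> ff x" by (simp add: ff_def)

lemma ff_le: "2/3 * ff x \<le> gg x"
proof -
  have e: "exp (- 2 * x\<^sup>2) \<le> exp (- x\<^sup>2)" by simp
  have s: "2/3 * sqrt 2 \<le> 1"
  proof -
    have "sqrt 2 \<le> 3/2" by (rule real_le_lsqrt) (auto simp: power2_eq_square)
    then show ?thesis by simp
  qed
  have "2/3 * ff x = (2/3 * sqrt 2) * exp (- 2 * x\<^sup>2) / sqrt pi" by (simp add: ff_eq)
  also have "\<dots> \<le> 1 * exp (- x\<^sup>2) / sqrt pi"
    by (intro divide_right_mono mult_mono s e) auto
  finally show ?thesis by (simp add: gg_eq)
qed

lemma hh_bounds: "- gg x / 2 \<le> hh x" "hh x \<le> gg x / 2"
  using ff_le[of x] ff_nonneg[of x] by (auto simp: hh_def)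

lemma int_gg: "integrable lborel gg" "integral\<^sup>L lborel gg = 1"
  by (simp_all add: gg_def[abs_def])
lemma int_ff: "integrable lborel ff" "integral\<^sup>L lborel ff = 1"
  by (simp_all add: ff_def[abs_def])

lemma mom_gen:
  assumes "0 < \<sigma>"
  shows "integrable lborel (\<lambda>x. x * normal_density 0 \<sigma> x)"
    "integral\<^sup>L lborel (\<lambda>x. x * normal_density 0 \<sigma> x) = 0"
    "integrable lborel (\<lambda>x. x\<^sup>2 * normal_density 0 \<sigma> x)"
    "integral\<^sup>L lborel (\<lambda>x. x\<^sup>2 * normal_density 0 \<sigma> x) = \<sigma>\<^sup>2"
proof -
  show "integrable lborel (\<lambda>x. x * normal_density 0 \<sigma> x)"
    using integrable_normal_moment[OF assms, of 0 1] by (simp add: mult.commute)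
  show "integral\<^sup>L lborel (\<lambda>x. x * normal_density 0 \<sigma> x) = 0"
    using integral_normal_moment_odd[OF assms, of 0 0] by (simp add: mult.commute)
  show "integrable lborel (\<lambda>x. x\<^sup>2 * normal_density 0 \<sigma> x)"
    using integrable_normal_moment[OF assms, of 0 2] by (simp add: mult.commute)
  show "integral\<^sup>L lborel (\<lambda>x. x\<^sup>2 * normal_density 0 \<sigma> x) = \<sigma>\<^sup>2"
    using integral_normal_moment_even[OF assms, of 0 1] by (simp add: mult.commute)
qed



definition nu :: "(nat \<times> real \<times> real) measure" where
  "nu = count_space {0,1} \<Otimes>\<^sub>M (lborel \<Otimes>\<^sub>M lborel)"

lemma sets_nu: "sets nu = sets joint_space"
  unfolding nu_def joint_space_def
  by (intro sets_pair_measure_cong refl) simp_all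

lemma space_nu: "space nu = {0,1} \<times> UNIV \<times> UNIV"
  by (simp add: nu_def space_pair_measure)

lemma space_joint: "space joint_space = {0,1} \<times> UNIV \<times> UNIV"
  by (simp add: joint_space_def space_pair_measure)

lemma prod2:
  fixes a b :: "real \<Rightarrow> real"
  assumes a: "integrable lborel a" and b: "integrable lborel b"
  shows "integrable (lborel \<Otimes>\<^sub>M lborel) (\<lambda>(x,y). a x * b y)"
    and "integral\<^sup>L (lborel \<Otimes>\<^sub>M lborel) (\<lambda>(x,y). a x * b y) = integral\<^sup>L lborel a * integral\<^sup>L lborel b"
proof -
  have [measurable]: "a \<in> borel_measurable lborel" "b \<in> borel_measurable lborel" using a b by auto
  show int: "integrable (lborel \<Otimes>\<^sub>M lborel) (\<lambda>(x,y). a x * b y)"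
  proof (rule lborel_pair.Fubini_integrable)
    show "(\<lambda>(x,y). a x * b y) \<in> borel_measurable (lborel \<Otimes>\<^sub>M lborel)" by measurable
    show "integrable lborel (\<lambda>x. \<integral>y. norm ((\<lambda>(x,y). a x * b y) (x,y)) \<partial>lborel)"
      by (auto simp: abs_mult intro!: integrable_abs a)
    show "AE x in lborel. integrable lborel (\<lambda>y. (\<lambda>(x,y). a x * b y) (x,y))" using b by simp
  qed
  have "integral\<^sup>L (lborel \<Otimes>\<^sub>M lborel) (\<lambda>(x,y). a x * b y) = (\<integral>x. (\<integral>y. a x * b y \<partial>lborel) \<partial>lborel)"
    using lborel_pair.integral_fst'[OF int] by simp
  also have "\<dots> = integral\<^sup>L lborel a * integral\<^sup>L lborel b" by simp
  finally show "integral\<^sup>L (lborel \<Otimes>\<^sub>M lborel) (\<lambda>(x,y). a x * b y) = integral\<^sup>L lborel a * integral\<^sup>L lborel b" .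
qed

lemma prod3:
  fixes c :: "nat \<Rightarrow> real" and a b :: "real \<Rightarrow> real"
  assumes a: "integrable lborel a" and b: "integrable lborel b"
  shows "integrable nu (\<lambda>(n,x,y). c n * a x * b y)"
    and "integral\<^sup>L nu (\<lambda>(n,x,y). c n * a x * b y) = (c 0 + c 1) * integral\<^sup>L lborel a * integral\<^sup>L lborel b"
proof -
  interpret Q: pair_sigma_finite "count_space {0::nat,1}" "lborel \<Otimes>\<^sub>M lborel"
    by (intro pair_sigma_finite.intro sigma_finite_measure_count_space_finite sigma_finite_pair_measure lborel.sigma_finite_measure_axioms) simp
  have [measurable]: "a \<in> borel_measurable lborel" "b \<in> borel_measurable lborel" using a b by auto
  have i2: "\<And>n. integrable (lborel \<Otimes>\<^sub>M lborel) (\<lambda>(x,y). (c n * a x) * b y)"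
    by (rule prod2) (use a b in auto)
  show int: "integrable nu (\<lambda>(n,x,y). c n * a x * b y)"
    unfolding nu_def
  proof (rule Q.Fubini_integrable)
    have ma: "(\<lambda>\<omega>. a (fst (snd \<omega>))) \<in> borel_measurable (count_space {0::nat,1} \<Otimes>\<^sub>M (lborel \<Otimes>\<^sub>M lborel))"
      by (rule measurable_compose[OF measurable_compose[OF measurable_snd measurable_fst]]) simp
    have mb: "(\<lambda>\<omega>. b (snd (snd \<omega>))) \<in> borel_measurable (count_space {0::nat,1} \<Otimes>\<^sub>M (lborel \<Otimes>\<^sub>M lborel))"
      by (rule measurable_compose[OF measurable_compose[OF measurable_snd measurable_snd]]) simp
    have mc: "(\<lambda>\<omega>. c (fst \<omega>)) \<in> borel_measurable (count_space {0::nat,1} \<Otimes>\<^sub>M (lborel \<Otimes>\<^sub>M lborel))"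
      by (rule measurable_compose[OF measurable_fst]) simp
    show "(\<lambda>(n,x,y). c n * a x * b y) \<in> borel_measurable (count_space {0,1} \<Otimes>\<^sub>M (lborel \<Otimes>\<^sub>M lborel))"
      using borel_measurable_times[OF borel_measurable_times[OF mc ma] mb] by (simp add: case_prod_beta')
    show "integrable (count_space {0,1}) (\<lambda>n. \<integral>p. norm ((\<lambda>(n,x,y). c n * a x * b y) (n,p)) \<partial>(lborel \<Otimes>\<^sub>M lborel))"
      by (rule integrable_count_space) simp
    show "AE n in count_space {0,1}. integrable (lborel \<Otimes>\<^sub>M lborel) (\<lambda>p. (\<lambda>(n,x,y). c n * a x * b y) (n,p))"
      using i2 by (simp add: case_prod_beta')
  qed
  have "integral\<^sup>L nu (\<lambda>(n,x,y). c n * a x * b y) =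
     (\<integral>n. (\<integral>p. (\<lambda>(n,x,y). c n * a x * b y) (n,p) \<partial>(lborel \<Otimes>\<^sub>M lborel)) \<partial>count_space {0,1})"
    using Q.integral_fst'[OF int[unfolded nu_def]] by (simp add: nu_def)
  also have "\<dots> = (\<integral>n. c n * integral\<^sup>L lborel a * integral\<^sup>L lborel b \<partial>count_space {0,1})"
  proof -
    have P2: "(\<integral>p. a (fst p) * b (snd p) \<partial>(lborel \<Otimes>\<^sub>M lborel)) = integral\<^sup>L lborel a * integral\<^sup>L lborel b"
      using prod2(2)[OF a b] by (simp add: case_prod_beta')
    show ?thesis
      by (rule Bochner_Integration.integral_cong) (auto simp: case_prod_beta' mult.assoc P2)
  qed
  also have "\<dots> = (c 0 + c 1) * integral\<^sup>L lborel a * integral\<^sup>L lborel b"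
    by (simp add: lebesgue_integral_count_space_finite algebra_simps)
  finally show "integral\<^sup>L nu (\<lambda>(n,x,y). c n * a x * b y) = (c 0 + c 1) * integral\<^sup>L lborel a * integral\<^sup>L lborel b" .
qed



definition Pt :: "complex \<Rightarrow> (nat \<Rightarrow> real) \<Rightarrow> (real \<Rightarrow> real) \<Rightarrow> (real \<Rightarrow> real) \<Rightarrow> nat \<times> real \<times> real \<Rightarrow> complex" where
  "Pt k c a b \<omega> = k * complex_of_real (c (fst \<omega>) * a (fst (snd \<omega>)) * b (snd (snd \<omega>)))"

lemma Pt_int:
  assumes "integrable lborel a" "integrable lborel b"
  shows "integrable nu (Pt k c a b)"
proof -
  have "integrable nu (\<lambda>\<omega>. c (fst \<omega>) * a (fst (snd \<omega>)) * b (snd (snd \<omega>)))"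
    using prod3(1)[OF assms, of c] by (simp add: case_prod_beta')
  then have "integrable nu (\<lambda>\<omega>. complex_of_real (c (fst \<omega>) * a (fst (snd \<omega>)) * b (snd (snd \<omega>))))"
    by (simp only: complex_of_real_integrable_eq)
  then show ?thesis unfolding Pt_def[abs_def] by (rule integrable_mult_right)
qed

lemma Pt_set:
  assumes a: "integrable lborel a" and b: "integrable lborel b"
    and X: "X \<in> sets borel" and Y: "Y \<in> sets borel"
  shows "set_integrable nu (A \<times> X \<times> Y) (Pt k c a b)"
    and "(LINT \<omega>:(A \<times> X \<times> Y)|nu. Pt k c a b \<omega>) =
       k * complex_of_real ((indicator A 0 * c 0 + indicator A 1 * c 1) *
          (LINT x:X|lborel. a x) * (LINT y:Y|lborel. b y))"
proof -
  have eq: "(\<lambda>\<omega>. indicator (A \<times> X \<times> Y) \<omega> *\<^sub>R Pt k c a b \<omega>) =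
      Pt k (\<lambda>n. indicator A n * c n) (\<lambda>x. indicator X x * a x) (\<lambda>y. indicator Y y * b y)"
    by (auto simp: Pt_def fun_eq_iff split: split_indicator)
  have a': "integrable lborel (\<lambda>x. indicator X x * a x)"
    using integrable_mult_indicator[of X lborel a] a X by simp
  have b': "integrable lborel (\<lambda>x. indicator Y x * b x)"
    using integrable_mult_indicator[of Y lborel b] b Y by simp
  show "set_integrable nu (A \<times> X \<times> Y) (Pt k c a b)"
    unfolding set_integrable_def eq by (rule Pt_int[OF a' b'])
  have "(LINT \<omega>:(A \<times> X \<times> Y)|nu. Pt k c a b \<omega>) =
      integral\<^sup>L nu (Pt k (\<lambda>n. indicator A n * c n) (\<lambda>x. indicator X x * a x) (\<lambda>y. indicator Y y * b y))"
    unfolding set_lebesgue_integral_def eq ..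
  also have "\<dots> = k * complex_of_real (integral\<^sup>L nu (\<lambda>(n,x,y). (indicator A n * c n) * (indicator X x * a x) * (indicator Y y * b y)))"
    unfolding Pt_def[abs_def] integral_mult_right_zero integral_complex_of_real by (simp only: case_prod_beta')
  also have "\<dots> = k * complex_of_real ((indicator A 0 * c 0 + indicator A 1 * c 1) *
          (LINT x:X|lborel. a x) * (LINT y:Y|lborel. b y))"
    by (subst prod3(2)[OF a' b']) (simp add: set_lebesgue_integral_def)
  finally show "(LINT \<omega>:(A \<times> X \<times> Y)|nu. Pt k c a b \<omega>) =
       k * complex_of_real ((indicator A 0 * c 0 + indicator A 1 * c 1) *
          (LINT x:X|lborel. a x) * (LINT y:Y|lborel. b y))" .
qed



definition sg :: "nat \<Rightarrow> real" where "sg n = (if n = 0 then 1 else -1)"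
definition Pn :: "nat \<Rightarrow> real" where "Pn n = (if n = 0 then 1 else 0)"
definition one :: "nat \<Rightarrow> real" where "one n = 1"
definition xg :: "real \<Rightarrow> real" where "xg x = x * gg x"
definition x2g :: "real \<Rightarrow> real" where "x2g x = x\<^sup>2 * gg x"
definition xh :: "real \<Rightarrow> real" where "xh x = x * hh x"
definition x2h :: "real \<Rightarrow> real" where "x2h x = x\<^sup>2 * hh x"

lemma xh_alt: "xh = (\<lambda>x. 2/3 * (x * ff x) - (x * gg x) / 2)"
  by (auto simp: fun_eq_iff xh_def hh_def algebra_simps)
lemma x2h_alt: "x2h = (\<lambda>x. 2/3 * (x\<^sup>2 * ff x) - (x\<^sup>2 * gg x) / 2)"
  by (auto simp: fun_eq_iff x2h_def hh_def algebra_simps)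

lemma integrable_all:
  "integrable lborel gg" "integrable lborel hh" "integrable lborel xg" "integrable lborel x2g"
  "integrable lborel xh" "integrable lborel x2h"
proof -
  have s1: "(0::real) < 1 / sqrt 2" by simp
  have s2: "(0::real) < 1 / 2" by simp
  note m1 = mom_gen[OF s1] and m2 = mom_gen[OF s2]
  show "integrable lborel gg" by (rule int_gg)
  show "integrable lborel hh" unfolding hh_def[abs_def]
    by (intro Bochner_Integration.integrable_diff integrable_mult_right integrable_divide int_gg int_ff)
  show "integrable lborel xg" using m1(1) by (simp add: xg_def[abs_def] gg_def[abs_def])
  show "integrable lborel x2g" using m1(3) by (simp add: x2g_def[abs_def] gg_def[abs_def])
  show "integrable lborel xh" unfolding xh_alt
    by (intro Bochner_Integration.integrable_diff integrable_mult_right integrable_divide)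
       (use m1(1) m2(1) in \<open>simp_all add: gg_def[abs_def] ff_def[abs_def]\<close>)
  show "integrable lborel x2h" unfolding x2h_alt
    by (intro Bochner_Integration.integrable_diff integrable_mult_right integrable_divide)
       (use m1(3) m2(3) in \<open>simp_all add: gg_def[abs_def] ff_def[abs_def]\<close>)
qed

lemma integral_all:
  "integral\<^sup>L lborel gg = 1" "integral\<^sup>L lborel hh = 1/6" "integral\<^sup>L lborel xg = 0"
  "integral\<^sup>L lborel x2g = 1/2" "integral\<^sup>L lborel xh = 0" "integral\<^sup>L lborel x2h = -1/12"
proof -
  have s1: "(0::real) < 1 / sqrt 2" by simp
  have s2: "(0::real) < 1 / 2" by simp
  note m1 = mom_gen[OF s1] and m2 = mom_gen[OF s2]
  show "integral\<^sup>L lborel gg = 1" by (rule int_gg)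
  show "integral\<^sup>L lborel hh = 1/6"
  proof -
    have i1: "integrable lborel (\<lambda>x. 2/3 * ff x)" by (intro integrable_mult_right int_ff)
    have i2: "integrable lborel (\<lambda>x. gg x / 2)" by (intro integrable_divide int_gg)
    show ?thesis unfolding hh_def[abs_def] using int_gg int_ff by (simp add: Bochner_Integration.integral_diff[OF i1 i2])
  qed
  show "integral\<^sup>L lborel xg = 0" using m1(2) by (simp add: xg_def[abs_def] gg_def[abs_def])
  show "integral\<^sup>L lborel x2g = 1/2" using m1(4) by (simp add: x2g_def[abs_def] gg_def[abs_def] power_divide)
  have i1: "integrable lborel (\<lambda>x. 2/3 * (x * ff x))" "integrable lborel (\<lambda>x. (x * gg x) / 2)"
    "integrable lborel (\<lambda>x. 2/3 * (x\<^sup>2 * ff x))" "integrable lborel (\<lambda>x. (x\<^sup>2 * gg x) / 2)"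
    using m1(1,3) m2(1,3) by (auto simp: gg_def[abs_def] ff_def[abs_def] intro!: integrable_mult_right integrable_divide)
  show "integral\<^sup>L lborel xh = 0" unfolding xh_alt Bochner_Integration.integral_diff[OF i1(1,2)]
    using m1 m2 by (simp add: gg_def[abs_def] ff_def[abs_def])
  show "integral\<^sup>L lborel x2h = -1/12" unfolding x2h_alt Bochner_Integration.integral_diff[OF i1(3,4)]
    using m1 m2 by (simp add: gg_def[abs_def] ff_def[abs_def] power_divide)
qed



definition H11 :: "real \<Rightarrow> real \<Rightarrow> real \<Rightarrow> real \<Rightarrow> nat \<times> real \<times> real \<Rightarrow> complex" where
  "H11 l0 lt pN k \<omega> = Pt (of_real (l0/2)) one gg gg \<omega> + Pt (of_real (l0*k)) sg hh gg \<omega>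
     + Pt (of_real (lt/2)) one gg gg \<omega> + Pt (of_real (lt*k)) sg gg hh \<omega>
     + Pt 1 (\<lambda>n. pN * Pn n + (1 - l0 - lt - pN)/2) gg gg \<omega>"

definition H22 :: "real \<Rightarrow> real \<Rightarrow> real \<Rightarrow> real \<Rightarrow> nat \<times> real \<times> real \<Rightarrow> complex" where
  "H22 l0 lt pN k \<omega> = Pt (of_real l0) one x2g gg \<omega> + Pt (of_real (2*l0*k)) sg x2h gg \<omega>
     + Pt (of_real lt) one gg x2g \<omega> + Pt (of_real (2*lt*k)) sg gg x2h \<omega>
     + Pt 1 (\<lambda>n. pN * (1 - Pn n) + (1 - l0 - lt - pN)/2) gg gg \<omega>"

definition H12 :: "real \<Rightarrow> real \<Rightarrow> real \<Rightarrow> real \<Rightarrow> complex \<Rightarrow> nat \<times> real \<times> real \<Rightarrow> complex" where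
  "H12 l0 lt pN k e \<omega> = Pt (of_real (l0* sqrt 2/2)) one xg gg \<omega> + Pt (of_real (l0*k* sqrt 2)) sg xh gg \<omega>
     + Pt (of_real (lt* sqrt 2/2) * e) one gg xg \<omega> + Pt (of_real (lt*k* sqrt 2) * e) sg gg xh \<omega>"

definition Hmat :: "real \<Rightarrow> real \<Rightarrow> real \<Rightarrow> real \<Rightarrow> real \<Rightarrow> nat \<times> real \<times> real \<Rightarrow> cmat2" where
  "Hmat l0 lt pN k th \<omega> = mat2 (H11 l0 lt pN k \<omega>) (H12 l0 lt pN k (exp (- \<i> * of_real th)) \<omega>)
      (H12 l0 lt pN k (exp (\<i> * of_real th)) \<omega>) (H22 l0 lt pN k \<omega>)"

definition GG :: "real \<Rightarrow> real \<Rightarrow> real \<Rightarrow> real \<Rightarrow> real \<Rightarrow> (nat \<times> real \<times> real) set \<Rightarrow> cmat2" where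
  "GG l0 lt pN k th S = (\<chi> i j. LINT \<omega>:S|nu. Hmat l0 lt pN k th \<omega> $ i $ j)"

lemma Hmat_simps:
  "Hmat l0 lt pN k th \<omega> $ 1 $ 1 = H11 l0 lt pN k \<omega>"
  "Hmat l0 lt pN k th \<omega> $ 1 $ 2 = H12 l0 lt pN k (exp (- \<i> * of_real th)) \<omega>"
  "Hmat l0 lt pN k th \<omega> $ 2 $ 1 = H12 l0 lt pN k (exp (\<i> * of_real th)) \<omega>"
  "Hmat l0 lt pN k th \<omega> $ 2 $ 2 = H22 l0 lt pN k \<omega>"
  by (simp_all add: Hmat_def mat2_def)

lemma set_int_UNIV: "(LINT x:UNIV|M. f x) = integral\<^sup>L M f"
  by (simp add: set_lebesgue_integral_def)

lemmas PtI = Pt_set[OF _ _ _ _, where X=UNIV and Y=UNIV, simplified]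

lemma sets_UNIV_borel: "UNIV \<in> sets borel" by simp

definition RR :: "real \<Rightarrow> nat \<Rightarrow> real \<Rightarrow> real" where
  "RR k n x = gg x / 2 + sg n * k * hh x"

lemma H11_pt: "H11 l0 lt pN k (n,x,y) = of_real (l0 * RR k n x * gg y + lt * gg x * RR k n y
   + (pN * Pn n + (1 - l0 - lt - pN)/2) * gg x * gg y)"
  by (simp add: H11_def Pt_def RR_def one_def algebra_simps)

lemma H22_pt: "H22 l0 lt pN k (n,x,y) = of_real ((l0 * RR k n x * gg y) * (2 * x\<^sup>2) + (lt * gg x * RR k n y) * (2 * y\<^sup>2)
   + (pN * (1 - Pn n) + (1 - l0 - lt - pN)/2) * gg x * gg y)"
  by (simp add: H22_def Pt_def RR_def one_def x2g_def x2h_def algebra_simps)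

lemma H12_pt: "H12 l0 lt pN k e (n,x,y) = of_real ((l0 * RR k n x * gg y) * (sqrt 2 * x)) + of_real ((lt * gg x * RR k n y) * (sqrt 2 * y)) * e"
  by (simp add: H12_def Pt_def RR_def one_def xg_def xh_def algebra_simps)

lemma RR_nonneg: "0 \<le> k \<Longrightarrow> k \<le> 1 \<Longrightarrow> 0 \<le> RR k n x"
proof -
  assume k: "0 \<le> k" "k \<le> 1"
  have b: "- gg x / 2 \<le> hh x" "hh x \<le> gg x / 2" by (rule hh_bounds)+
  have "\<bar>sg n * k * hh x\<bar> \<le> gg x / 2"
  proof -
    have "\<bar>sg n * k * hh x\<bar> = k * \<bar>hh x\<bar>" using k by (simp add: sg_def abs_mult)
    also have "\<dots> \<le> 1 * \<bar>hh x\<bar>" using k by (intro mult_right_mono) auto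
    also have "\<dots> \<le> gg x / 2" using b by auto
    finally show ?thesis .
  qed
  then show ?thesis unfolding RR_def by linarith
qed

lemma quad_identity:
  fixes cv1 cv2 v1 v2 c1 c2 d1 d2 a b bc :: complex
  shows "cv1 * ((c1 + c2 + d1) * v1 + (c1 * a + c2 * b) * v2) + cv2 * ((c1 * a + c2 * bc) * v1 + (c1 * (a * a) + c2 * (b * bc) + d2) * v2)
     = c1 * ((v1 + a * v2) * (cv1 + a * cv2)) + c2 * ((v1 + b * v2) * (cv1 + bc * cv2)) + d1 * (v1 * cv1) + d2 * (v2 * cv2)"
  by (simp add: algebra_simps)

lemma cnj_sq: "z * cnj z = complex_of_real ((cmod z)\<^sup>2)"
  by (rule complex_norm_square[symmetric])

lemma psd_pt:
  fixes c1 c2 d1 d2 r s th :: real and v1 v2 :: complex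
  assumes "0 \<le> c1" "0 \<le> c2" "0 \<le> d1" "0 \<le> d2"
  defines "E \<equiv> exp (\<i> * of_real th)" and "E' \<equiv> exp (- \<i> * of_real th)"
  shows "cnj v1 * (of_real (c1 + c2 + d1) * v1 + (of_real (c1 * r) + of_real (c2 * s) * E') * v2)
       + cnj v2 * ((of_real (c1 * r) + of_real (c2 * s) * E) * v1 + of_real (c1 * r\<^sup>2 + c2 * s\<^sup>2 + d2) * v2)
     = of_real (c1 * (cmod (v1 + of_real r * v2))\<^sup>2 + c2 * (cmod (v1 + of_real s * E' * v2))\<^sup>2
          + d1 * (cmod v1)\<^sup>2 + d2 * (cmod v2)\<^sup>2)"
proof -
  have EE: "E' * E = 1" unfolding E_def E'_def by (simp add: exp_add[symmetric])
  have cE: "cnj E' = E" unfolding E_def E'_def by (simp add: exp_cnj)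
  let ?b = "of_real s * E'" and ?bc = "of_real s * E"
  have bb: "?b * ?bc = of_real (s\<^sup>2)" using EE by (simp add: power2_eq_square algebra_simps)
  have "cnj v1 * (of_real (c1 + c2 + d1) * v1 + (of_real (c1 * r) + of_real (c2 * s) * E') * v2)
       + cnj v2 * ((of_real (c1 * r) + of_real (c2 * s) * E) * v1 + of_real (c1 * r\<^sup>2 + c2 * s\<^sup>2 + d2) * v2)
     = cnj v1 * ((of_real c1 + of_real c2 + of_real d1) * v1 + (of_real c1 * of_real r + of_real c2 * ?b) * v2)
       + cnj v2 * ((of_real c1 * of_real r + of_real c2 * ?bc) * v1 + (of_real c1 * (of_real r * of_real r) + of_real c2 * (?b * ?bc) + of_real d2) * v2)"
    by (simp only: bb) (simp add: power2_eq_square algebra_simps)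
  also have "\<dots> = of_real c1 * ((v1 + of_real r * v2) * (cnj v1 + of_real r * cnj v2)) + of_real c2 * ((v1 + ?b * v2) * (cnj v1 + ?bc * cnj v2))
      + of_real d1 * (v1 * cnj v1) + of_real d2 * (v2 * cnj v2)"
    by (rule quad_identity)
  also have "\<dots> = of_real c1 * ((v1 + of_real r * v2) * cnj (v1 + of_real r * v2)) + of_real c2 * ((v1 + ?b * v2) * cnj (v1 + ?b * v2))
      + of_real d1 * (v1 * cnj v1) + of_real d2 * (v2 * cnj v2)"
    using cE by simp
  also have "\<dots> = of_real (c1 * (cmod (v1 + of_real r * v2))\<^sup>2 + c2 * (cmod (v1 + of_real s * E' * v2))\<^sup>2
          + d1 * (cmod v1)\<^sup>2 + d2 * (cmod v2)\<^sup>2)"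
    by (simp only: cnj_sq of_real_add of_real_mult mult.assoc)
  finally show ?thesis .
qed



lemma H11_int: "integrable nu (H11 l0 lt pN k)"
  unfolding H11_def[abs_def]
  by (intro Bochner_Integration.integrable_add Pt_int integrable_all)
lemma H22_int: "integrable nu (H22 l0 lt pN k)"
  unfolding H22_def[abs_def]
  by (intro Bochner_Integration.integrable_add Pt_int integrable_all)
lemma H12_int: "integrable nu (H12 l0 lt pN k e)"
  unfolding H12_def[abs_def]
  by (intro Bochner_Integration.integrable_add Pt_int integrable_all)

lemma Hmat_int: "integrable nu (\<lambda>\<omega>. Hmat l0 lt pN k th \<omega> $ i $ j)"
proof -
  have "i = 1 \<or> i = 2" "j = 1 \<or> j = 2" by (rule exhaust_2)+
  then show ?thesis using H11_int H22_int H12_int by (auto simp: Hmat_simps)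
qed

lemma set_int_nu: "S \<in> sets nu \<Longrightarrow> integrable nu f \<Longrightarrow> set_integrable nu S (f :: _ \<Rightarrow> complex)"
  unfolding set_integrable_def by (rule integrable_mult_indicator)

lemma GG_entries:
  "GG l0 lt pN k th S = mat2 (LINT \<omega>:S|nu. H11 l0 lt pN k \<omega>)
      (LINT \<omega>:S|nu. H12 l0 lt pN k (exp (- \<i> * of_real th)) \<omega>)
      (LINT \<omega>:S|nu. H12 l0 lt pN k (exp (\<i> * of_real th)) \<omega>)
      (LINT \<omega>:S|nu. H22 l0 lt pN k \<omega>)"
  by (simp add: GG_def mat2_def vec_eq_iff forall_2 Hmat_simps)

lemma psd_GG:
  assumes S: "S \<in> sets nu" and l0: "0 \<le> l0" and lt: "0 \<le> lt" and pN: "0 \<le> pN"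
    and w: "l0 + lt + pN \<le> 1" and k: "0 \<le> k" "k \<le> 1"
  shows "psd2 (GG l0 lt pN k th S)"
  unfolding psd2_def
proof (intro allI)
  fix v :: "complex^2"
  define v1 where "v1 = v $ 1"
  define v2 where "v2 = v $ 2"
  define E where "E = exp (\<i> * complex_of_real th)"
  define E' where "E' = exp (- \<i> * complex_of_real th)"
  define Q where "Q = (\<lambda>\<omega>::nat\<times>real\<times>real. case \<omega> of (n,x,y) \<Rightarrow>
      (l0 * RR k n x * gg y) * (cmod (v1 + of_real (sqrt 2 * x) * v2))\<^sup>2
    + (lt * gg x * RR k n y) * (cmod (v1 + of_real (sqrt 2 * y) * E' * v2))\<^sup>2
    + ((pN * Pn n + (1 - l0 - lt - pN)/2) * gg x * gg y) * (cmod v1)\<^sup>2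
    + ((pN * (1 - Pn n) + (1 - l0 - lt - pN)/2) * gg x * gg y) * (cmod v2)\<^sup>2)"
  have Qnn: "0 \<le> Q \<omega>" for \<omega>
  proof -
    obtain n x y where om: "\<omega> = (n,x,y)" by (cases \<omega>) auto
    have r1: "0 \<le> RR k n x" "0 \<le> RR k n y" using RR_nonneg k by auto
    have p: "0 \<le> Pn n" "Pn n \<le> 1" by (auto simp: Pn_def)
    have d: "0 \<le> pN * Pn n + (1 - l0 - lt - pN)/2" "0 \<le> pN * (1 - Pn n) + (1 - l0 - lt - pN)/2"
      using p pN w by (auto intro!: add_nonneg_nonneg mult_nonneg_nonneg)
    show ?thesis unfolding om Q_def
      using r1 d l0 lt gg_nonneg[of x] gg_nonneg[of y]
      by (auto intro!: add_nonneg_nonneg mult_nonneg_nonneg)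
  qed
  have pt: "cnj v1 * (H11 l0 lt pN k \<omega> * v1 + H12 l0 lt pN k E' \<omega> * v2)
       + cnj v2 * (H12 l0 lt pN k E \<omega> * v1 + H22 l0 lt pN k \<omega> * v2) = of_real (Q \<omega>)" for \<omega>
  proof -
    obtain n x y where om: "\<omega> = (n,x,y)" by (cases \<omega>) auto
    have r1: "0 \<le> RR k n x" "0 \<le> RR k n y" using RR_nonneg k by auto
    have p: "0 \<le> Pn n" "Pn n \<le> 1" by (auto simp: Pn_def)
    have d: "0 \<le> pN * Pn n + (1 - l0 - lt - pN)/2" "0 \<le> pN * (1 - Pn n) + (1 - l0 - lt - pN)/2"
      using p pN w by (auto intro!: add_nonneg_nonneg mult_nonneg_nonneg)
    have sq: "(sqrt 2 * x)\<^sup>2 = 2 * x\<^sup>2" "(sqrt 2 * y)\<^sup>2 = 2 * y\<^sup>2" by (simp_all add: power_mult_distrib)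
    show ?thesis unfolding om H11_pt H22_pt H12_pt Q_def E_def E'_def prod.case
      using psd_pt[of "l0 * RR k n x * gg y" "lt * gg x * RR k n y"
          "(pN * Pn n + (1 - l0 - lt - pN)/2) * gg x * gg y" "(pN * (1 - Pn n) + (1 - l0 - lt - pN)/2) * gg x * gg y"
          v1 "sqrt 2 * x" "sqrt 2 * y" th v2]
      using r1 d l0 lt gg_nonneg[of x] gg_nonneg[of y] sq
      by (simp add: mult.assoc)
  qed
  have i: "set_integrable nu S (H11 l0 lt pN k)" "set_integrable nu S (H22 l0 lt pN k)"
    "set_integrable nu S (H12 l0 lt pN k E)" "set_integrable nu S (H12 l0 lt pN k E')"
    using S H11_int H22_int H12_int by (auto intro: set_int_nu)
  have "(\<Sum>i\<in>UNIV. cnj (v $ i) * (GG l0 lt pN k th S *v v) $ i)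
     = cnj v1 * ((LINT \<omega>:S|nu. H11 l0 lt pN k \<omega>) * v1 + (LINT \<omega>:S|nu. H12 l0 lt pN k E' \<omega>) * v2)
       + cnj v2 * ((LINT \<omega>:S|nu. H12 l0 lt pN k E \<omega>) * v1 + (LINT \<omega>:S|nu. H22 l0 lt pN k \<omega>) * v2)"
    by (simp add: GG_def matrix_vector_mult_def sum_2 Hmat_simps v1_def v2_def E_def E'_def)
  also have "\<dots> = (LINT \<omega>:S|nu. cnj v1 * (H11 l0 lt pN k \<omega> * v1 + H12 l0 lt pN k E' \<omega> * v2)
       + cnj v2 * (H12 l0 lt pN k E \<omega> * v1 + H22 l0 lt pN k \<omega> * v2))"
    using i by (simp add: ring_distribs set_integral_add)
  also have "\<dots> = (LINT \<omega>:S|nu. complex_of_real (Q \<omega>))"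
    by (simp only: pt)
  also have "\<dots> = of_real (LINT \<omega>:S|nu. Q \<omega>)"
    by (rule set_integral_complex_of_real)
  finally have q: "(\<Sum>i\<in>UNIV. cnj (v $ i) * (GG l0 lt pN k th S *v v) $ i) = of_real (LINT \<omega>:S|nu. Q \<omega>)" .
  have "0 \<le> (LINT \<omega>:S|nu. Q \<omega>)"
    using Qnn by (simp add: set_lebesgue_integral_def integral_nonneg)
  then show "let q = \<Sum>i\<in>UNIV. cnj (v $ i) * (GG l0 lt pN k th S *v v) $ i in Im q = 0 \<and> 0 \<le> Re q"
    unfolding q Let_def by simp
qed



lemma entry_sums:
  fixes h :: "nat \<times> real \<times> real \<Rightarrow> complex"
  assumes h: "integrable nu h" and F: "range F \<subseteq> sets nu" and disj: "disjoint_family F"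
  shows "(\<lambda>n. LINT \<omega>:F n|nu. h \<omega>) sums (LINT \<omega>:(\<Union>n. F n)|nu. h \<omega>)"
proof -
  have Fm: "F i \<in> sets nu" for i using F by auto
  have int_A: "integrable nu (\<lambda>x. indicator (F i) x *\<^sub>R h x)" for i
    using Fm h by (rule integrable_mult_indicator)
  have ptw: "(\<lambda>i. indicator (F i) x *\<^sub>R h x) sums (indicator (\<Union>i. F i) x *\<^sub>R h x)" for x
    by (intro sums_scaleR_left indicator_sums) (use disj in \<open>auto simp: disjoint_family_on_def\<close>)
  have s1: "AE x in nu. summable (\<lambda>i. norm (indicator (F i) x *\<^sub>R h x))"
  proof (intro AE_I2)
    fix x
    have "(\<lambda>i. indicator (F i) x * norm (h x)) sums (indicator (\<Union>i. F i) x * norm (h x))"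
      by (intro sums_mult2 indicator_sums) (use disj in \<open>auto simp: disjoint_family_on_def\<close>)
    then show "summable (\<lambda>i. norm (indicator (F i) x *\<^sub>R h x))"
      by (auto simp: sums_iff)
  qed
  have s2: "summable (\<lambda>i. LINT x|nu. norm (indicator (F i) x *\<^sub>R h x))"
  proof (rule summableI_nonneg_bounded)
    fix n
    show "0 \<le> LINT x|nu. norm (indicator (F n) x *\<^sub>R h x)"
      by (auto intro!: integral_nonneg_AE)
    have norm_f: "\<And>i. set_integrable nu (F i) (\<lambda>x. norm (h x))"
      unfolding set_integrable_def using Fm integrable_norm[OF h] by (intro integrable_mult_indicator)
    have "(\<Sum>i<n. LINT x|nu. norm (indicator (F i) x *\<^sub>R h x)) = (\<Sum>i<n. LINT x:F i|nu. norm (h x))"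
      by (simp add: set_lebesgue_integral_def)
    also have "\<dots> = set_lebesgue_integral nu (\<Union>i<n. F i) (\<lambda>x. norm (h x))"
      using norm_f disj Fm
      by (subst set_integral_finite_Union) (auto simp: disjoint_family_on_def disjoint_family_on_def)
    also have "\<dots> \<le> LINT x|nu. norm (h x)"
      unfolding set_lebesgue_integral_def
      using integrable_norm[OF h] Fm
      by (intro integral_mono integrable_mult_indicator) (auto split: split_indicator)
    finally show "(\<Sum>i<n. LINT x|nu. norm (indicator (F i) x *\<^sub>R h x)) \<le> LINT x|nu. norm (h x)" .
  qed
  have "(\<lambda>i. LINT x|nu. indicator (F i) x *\<^sub>R h x) sums (LINT x|nu. (\<Sum>i. indicator (F i) x *\<^sub>R h x))"
    by (rule sums_integral[OF int_A s1 s2])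
  moreover have "(\<lambda>x. \<Sum>i. indicator (F i) x *\<^sub>R h x) = (\<lambda>x. indicator (\<Union>i. F i) x *\<^sub>R h x)"
    using ptw by (simp add: sums_unique[symmetric] fun_eq_iff)
  ultimately show ?thesis by (simp add: set_lebesgue_integral_def)
qed

lemma GG_sums:
  assumes F: "range F \<subseteq> sets nu" and disj: "disjoint_family F"
  shows "(\<lambda>n. GG l0 lt pN k th (F n)) sums GG l0 lt pN k th (\<Union>n. F n)"
  unfolding sums_def
proof (intro vec_tendstoI)
  fix i j :: 2
  have "(\<lambda>n. LINT \<omega>:F n|nu. Hmat l0 lt pN k th \<omega> $ i $ j) sums (LINT \<omega>:(\<Union>n. F n)|nu. Hmat l0 lt pN k th \<omega> $ i $ j)"
    by (rule entry_sums[OF Hmat_int F disj])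
  then show "((\<lambda>m. (\<Sum>n<m. GG l0 lt pN k th (F n)) $ i $ j) \<longlongrightarrow> GG l0 lt pN k th (\<Union>n. F n) $ i $ j) sequentially"
    by (simp add: sums_def GG_def)
qed



lemma qd_entries:
  "quad_density \<delta> \<phi> x $ 1 $ 1 = of_real (gg x)"
  "quad_density \<delta> \<phi> x $ 1 $ 2 = of_real ((1-\<delta>) * sqrt 2 * xg x) * exp (- \<i> * of_real \<phi>)"
  "quad_density \<delta> \<phi> x $ 2 $ 1 = of_real ((1-\<delta>) * sqrt 2 * xg x) * exp (\<i> * of_real \<phi>)"
  "quad_density \<delta> \<phi> x $ 2 $ 2 = of_real ((1-\<delta>) * 2 * x2g x + \<delta> * gg x)"
  unfolding quad_density_def vector_scaleR_component
  by (simp_all add: mat2_def gg_eq xg_def x2g_def scaleR_conv_of_real algebra_simps) (simp_all add: field_simps)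

lemma quad_povm_eq:
  assumes X: "X \<in> sets borel"
  shows "quad_povm \<delta> \<phi> X = mat2 (of_real (LINT x:X|lborel. gg x))
     (of_real ((1-\<delta>) * sqrt 2 * (LINT x:X|lborel. xg x)) * exp (- \<i> * of_real \<phi>))
     (of_real ((1-\<delta>) * sqrt 2 * (LINT x:X|lborel. xg x)) * exp (\<i> * of_real \<phi>))
     (of_real ((1-\<delta>) * 2 * (LINT x:X|lborel. x2g x) + \<delta> * (LINT x:X|lborel. gg x)))"
proof -
  have si: "set_integrable lborel X gg" "set_integrable lborel X x2g"
    unfolding set_integrable_def using X integrable_mult_indicator[of X lborel gg] integrable_mult_indicator[of X lborel x2g] integrable_all
    by auto
  have a: "(LINT x:X|lborel. (1-\<delta>) * 2 * x2g x + \<delta> * gg x) = (1-\<delta>) * 2 * (LINT x:X|lborel. x2g x) + \<delta> * (LINT x:X|lborel. gg x)"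
  proof -
    have s3: "set_integrable lborel X (\<lambda>x. ((1-\<delta>) * 2) * x2g x)" using si(2) by (rule set_integrable_mult_right)
    have s4: "set_integrable lborel X (\<lambda>x. \<delta> * gg x)" using si(1) by (rule set_integrable_mult_right)
    have "(LINT x:X|lborel. (1-\<delta>) * 2 * x2g x + \<delta> * gg x) = (LINT x:X|lborel. (1-\<delta>) * 2 * x2g x) + (LINT x:X|lborel. \<delta> * gg x)"
      by (rule set_integral_add(2)[OF s3 s4])
    also have "\<dots> = (1-\<delta>) * 2 * (LINT x:X|lborel. x2g x) + \<delta> * (LINT x:X|lborel. gg x)"
      by (simp only: set_integral_mult_right)
    finally show ?thesis .
  qed
  have e: "(LINT x:X|lborel. quad_density \<delta> \<phi> x $ 1 $ 1) = of_real (LINT x:X|lborel. gg x)"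
    "(LINT x:X|lborel. quad_density \<delta> \<phi> x $ 1 $ 2) = of_real ((1-\<delta>) * sqrt 2 * (LINT x:X|lborel. xg x)) * exp (- \<i> * of_real \<phi>)"
    "(LINT x:X|lborel. quad_density \<delta> \<phi> x $ 2 $ 1) = of_real ((1-\<delta>) * sqrt 2 * (LINT x:X|lborel. xg x)) * exp (\<i> * of_real \<phi>)"
    "(LINT x:X|lborel. quad_density \<delta> \<phi> x $ 2 $ 2) = of_real ((1-\<delta>) * 2 * (LINT x:X|lborel. x2g x) + \<delta> * (LINT x:X|lborel. gg x))"
    by (simp only: qd_entries set_integral_complex_of_real set_integral_mult_left set_integral_mult_right a)+
  show ?thesis
    unfolding quad_povm_def
    by (simp only: vec_eq_iff forall_2 mat2_def vec_lambda_beta e vector_2)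
qed



lemma mat2_cong: "a = a' \<Longrightarrow> b = b' \<Longrightarrow> c = c' \<Longrightarrow> d = d' \<Longrightarrow> mat2 a b c d = mat2 a' b' c' d'"
  by simp

lemma GG_N:
  assumes c: "pN + k * (l0 + lt) / 3 = 1 - \<epsilon>" and n: "n \<in> {0,1}"
  shows "GG l0 lt pN k th ({n} \<times> UNIV \<times> UNIV) = num_povm \<epsilon> n"
proof -
  have cc: "complex_of_real pN = 1 - of_real \<epsilon> - of_real k * (of_real l0 + of_real lt) / 3"
  proof -
    have "pN = 1 - \<epsilon> - k * (l0 + lt) / 3" using c by simp
    then show ?thesis by simp
  qed
  show ?thesis using n
    unfolding GG_entries num_povm_def
    by (auto simp: H11_def[abs_def] H12_def[abs_def] H22_def[abs_def] PtI integrable_all set_int_UNIV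
        integral_all one_def sg_def Pn_def intro!: mat2_cong) (simp_all add: cc field_simps)
qed

lemma GG_Q0:
  assumes X: "X \<in> sets borel"
  shows "GG l0 lt pN k th ({0,1} \<times> X \<times> UNIV) = quad_povm (1 - l0) 0 X"
  unfolding GG_entries quad_povm_eq[OF X]
  by (auto simp: H11_def[abs_def] H12_def[abs_def] H22_def[abs_def] Pt_set[OF _ _ X sets_UNIV_borel] integrable_all set_int_UNIV
        integral_all one_def sg_def Pn_def intro!: mat2_cong) (simp_all add: field_simps)

lemma GG_Qt:
  assumes Y: "Y \<in> sets borel"
  shows "GG l0 lt pN k th ({0,1} \<times> UNIV \<times> Y) = quad_povm (1 - lt) th Y"
  unfolding GG_entries quad_povm_eq[OF Y]
  by (auto simp: H11_def[abs_def] H12_def[abs_def] H22_def[abs_def] Pt_set[OF _ _ sets_UNIV_borel Y] integrable_all set_int_UNIV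
        integral_all one_def sg_def Pn_def intro!: mat2_cong) (simp_all add: field_simps)



lemma mat1_eq: "(mat 1 :: cmat2) = mat2 1 0 0 1"
  by (simp add: vec_eq_iff forall_2 mat_def mat2_def)

lemma jm_construct:
  assumes l0: "0 \<le> 1 - \<epsilon>0" and lt: "0 \<le> 1 - \<epsilon>\<theta>" and pN: "0 \<le> pN"
    and w: "(1 - \<epsilon>0) + (1 - \<epsilon>\<theta>) + pN \<le> 1" and k: "0 \<le> k" "k \<le> 1"
    and c: "pN + k * ((1 - \<epsilon>0) + (1 - \<epsilon>\<theta>)) / 3 = 1 - \<epsilon>"
  shows "jointly_measurable_prono \<epsilon> \<epsilon>0 \<epsilon>\<theta> \<theta>"
proof -
  define G where "G = GG (1 - \<epsilon>0) (1 - \<epsilon>\<theta>) pN k \<theta>"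
  have "povm joint_space G"
    unfolding povm_def
  proof (intro conjI ballI allI impI)
    fix A assume "A \<in> sets joint_space"
    then show "psd2 (G A)" unfolding G_def using l0 lt pN w k
      by (intro psd_GG) (auto simp: sets_nu)
  next
    have "G (space joint_space) = quad_povm \<epsilon>0 0 UNIV"
      unfolding G_def space_joint using GG_Q0[of UNIV "1 - \<epsilon>0"] by simp
    also have "\<dots> = mat 1"
      by (simp add: quad_povm_eq mat1_eq set_int_UNIV integral_all field_simps)
    finally show "G (space joint_space) = mat 1" .
  next
    fix F :: "nat \<Rightarrow> (nat \<times> real \<times> real) set"
    assume "range F \<subseteq> sets joint_space" "disjoint_family F"
    then show "(\<lambda>n. G (F n)) sums G (\<Union>n. F n)"
      unfolding G_def by (intro GG_sums) (auto simp: sets_nu)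
  qed
  moreover have "\<forall>n\<in>{0,1}. num_povm \<epsilon> n = G ({n} \<times> UNIV \<times> UNIV)"
    unfolding G_def using GG_N[OF c] by auto
  moreover have "\<forall>X\<in>sets borel. quad_povm \<epsilon>0 0 X = G ({0,1} \<times> X \<times> UNIV)"
    unfolding G_def using GG_Q0 by auto
  moreover have "\<forall>Y\<in>sets borel. quad_povm \<epsilon>\<theta> \<theta> Y = G ({0,1} \<times> UNIV \<times> Y)"
    unfolding G_def using GG_Qt by auto
  ultimately show ?thesis unfolding jointly_measurable_prono_def by blast
qed

theorem mainTheorem6:
  fixes \<epsilon> \<epsilon>0 \<epsilon>\<theta> \<theta> :: real
  assumes "\<epsilon> \<in> {0..1}" and "\<epsilon>0 \<in> {0..1}" and "\<epsilon>\<theta> \<in> {0..1}"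
  shows "(\<epsilon> / (2 - \<epsilon>) + \<epsilon>0 + \<epsilon>\<theta> - 2 \<ge> 0 \<longrightarrow> jointly_measurable_prono \<epsilon> \<epsilon>0 \<epsilon>\<theta> \<theta>)
       \<and> (\<epsilon> = \<epsilon>0 \<and> \<epsilon>0 = \<epsilon>\<theta> \<and> \<epsilon> \<ge> 4/7 \<longrightarrow> jointly_measurable_prono \<epsilon> \<epsilon>0 \<epsilon>\<theta> \<theta>)"
proof (intro conjI impI)
  assume h: "\<epsilon> / (2 - \<epsilon>) + \<epsilon>0 + \<epsilon>\<theta> - 2 \<ge> 0"
  have "\<epsilon> / (2 - \<epsilon>) \<le> \<epsilon>"
  proof -
    have "\<epsilon> \<le> \<epsilon> * (2 - \<epsilon>)" using assms(1) by (auto simp: algebra_simps power2_eq_square intro: mult_left_le_one_le)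
    then show ?thesis using assms(1) by (simp add: divide_le_eq)
  qed
  with h have s: "\<epsilon> + \<epsilon>0 + \<epsilon>\<theta> \<ge> 2" by linarith
  show "jointly_measurable_prono \<epsilon> \<epsilon>0 \<epsilon>\<theta> \<theta>"
    by (rule jm_construct[where pN = "1 - \<epsilon>" and k = 0]) (use assms s in auto)
next
  assume h: "\<epsilon> = \<epsilon>0 \<and> \<epsilon>0 = \<epsilon>\<theta> \<and> \<epsilon> \<ge> 4/7"
  show "jointly_measurable_prono \<epsilon> \<epsilon>0 \<epsilon>\<theta> \<theta>"
    by (rule jm_construct[where pN = "(1 - \<epsilon>) / 3" and k = 1]) (use assms h in \<open>auto simp: field_simps\<close>)
qed

end
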